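(* Let $\mathcal{G}=\langle G_1,\dots,G_L\rangle$ be a non-strict temporal graph with vertex set $V$, $|V|=n$, in which every layer consists of exactly two components and no two consecutive layers have the same partition. If there are $1+\log_2 n$ consecutive free transitions (i.e., the transitions from step $j$ to step $j+1$ are free for all $j\in\{t,t+1,\dots,t+m-1\}$ with $m\ge 1+\log_2 n$ and $t+m\le L$), then for every $s\in V$ there is a non-strict exploration schedule starting at $s$.
   Context: A non-strict temporal graph $\mathcal{G}=\langle G_1,\dots,G_L\rangle$ with vertex set $V$ is a sequence of partitions $G_t$ of $V$ into components. A non-strict temporal walk starting at $v$ at time $t_1$ is a sequence of components $C_{t_1},\dots,C_{t_l}$ with $t_{j+1}=t_j+1$, $C_{t_j}\in G_{t_j}$, $C_{t_j}\cap C_{t_{j+1}}\neq\emptyset$, $v\in C_{t_1}$, $t_l\le L$; it visits $\bigcup_j C_{t_j}$. A non-strict exploration schedule starting at $s$ is such a walk starting at $s$ at time $1$ that visits all of $V$. For $G_i=\{A_i,B_i\}$, $G_{i+1}=\{A_{i+1},B_{i+1}\}$, the transition from step $i$ to $i+1$ is free if $A_i\cap A_{i+1}$, $A_i\cap B_{i+1}$, $B_i\cap A_{i+1}$, $B_i\cap B_{i+1}$ are all non-empty. *)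

theory Defs
  imports Complex_Main
begin

text \<open>A non-strict temporal graph with vertex set V and lifetime L is modelled as a
function G from time steps to sets of components; only the layers G 1, ..., G L matter.\<close>

definition is_partition :: "'a set \<Rightarrow> 'a set set \<Rightarrow> bool" where
  "is_partition V P \<longleftrightarrow>
     (\<forall>C\<in>P. C \<noteq> {}) \<and> \<Union>P = V \<and> (\<forall>C\<in>P. \<forall>D\<in>P. C \<noteq> D \<longrightarrow> C \<inter> D = {})"

definition temporal_graph :: "'a set \<Rightarrow> nat \<Rightarrow> (nat \<Rightarrow> 'a set set) \<Rightarrow> bool" where
  "temporal_graph V L G \<longleftrightarrow> (\<forall>t\<in>{1..L}. is_partition V (G t))"

text \<open>A non-strict temporal walk starting at v at time t1 consisting of l components
C t1, C (t1+1), ..., C (t1+l-1) (indexed by absolute time).\<close>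

definition nonstrict_walk ::
  "nat \<Rightarrow> (nat \<Rightarrow> 'a set set) \<Rightarrow> 'a \<Rightarrow> nat \<Rightarrow> nat \<Rightarrow> (nat \<Rightarrow> 'a set) \<Rightarrow> bool" where
  "nonstrict_walk L G v t1 l C \<longleftrightarrow>
     1 \<le> t1 \<and> 1 \<le> l \<and> t1 + l - 1 \<le> L \<and>
     (\<forall>j<l. C (t1 + j) \<in> G (t1 + j)) \<and>
     (\<forall>j. Suc j < l \<longrightarrow> C (t1 + j) \<inter> C (t1 + Suc j) \<noteq> {}) \<and>
     v \<in> C t1"

definition walk_visits :: "nat \<Rightarrow> nat \<Rightarrow> (nat \<Rightarrow> 'a set) \<Rightarrow> 'a set" where
  "walk_visits t1 l C = (\<Union>j<l. C (t1 + j))"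

definition exploration_schedule ::
  "'a set \<Rightarrow> nat \<Rightarrow> (nat \<Rightarrow> 'a set set) \<Rightarrow> 'a \<Rightarrow> bool" where
  "exploration_schedule V L G s \<longleftrightarrow>
     (\<exists>l C. nonstrict_walk L G s 1 l C \<and> walk_visits 1 l C = V)"

definition free_transition :: "(nat \<Rightarrow> 'a set set) \<Rightarrow> nat \<Rightarrow> bool" where
  "free_transition G i \<longleftrightarrow>
     (\<exists>A B A' B'. G i = {A, B} \<and> G (Suc i) = {A', B'} \<and>
        A \<inter> A' \<noteq> {} \<and> A \<inter> B' \<noteq> {} \<and> B \<inter> A' \<noteq> {} \<and> B \<inter> B' \<noteq> {})"

end

theory Submission
  imports Defs
begin

lemma comp_props:
  assumes "temporal_graph V L G" "1 \<le> i" "i \<le> L" "D \<in> G i"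
  shows "D \<subseteq> V" "D \<noteq> {}"
  using assms unfolding temporal_graph_def is_partition_def by auto

lemma comp_exists:
  assumes "temporal_graph V L G" "1 \<le> i" "i \<le> L" "x \<in> V"
  shows "\<exists>D\<in>G i. x \<in> D"
  using assms unfolding temporal_graph_def is_partition_def by auto

lemma extend:
  assumes "nonstrict_walk L G s 1 T C" "D \<in> G (Suc T)" "C T \<inter> D \<noteq> {}" "Suc T \<le> L"
  shows "nonstrict_walk L G s 1 (Suc T) (C(Suc T := D))"
    "walk_visits 1 (Suc T) (C(Suc T := D)) = walk_visits 1 T C \<union> D"
proof -
  have T1: "1 \<le> T" using assms(1) unfolding nonstrict_walk_def by auto
  have a: "\<forall>j<T. C (1 + j) \<in> G (1 + j)" "\<forall>j. Suc j < T \<longrightarrow> C (1 + j) \<inter> C (1 + Suc j) \<noteq> {}"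
    "s \<in> C 1" using assms(1) unfolding nonstrict_walk_def by auto
  have b: "\<forall>j<Suc T. (C(Suc T := D)) (1 + j) \<in> G (1 + j)"
  proof (intro allI impI)
    fix j assume "j < Suc T"
    then show "(C(Suc T := D)) (1 + j) \<in> G (1 + j)" using a(1) assms(2)
      by (cases "j < T") (auto simp: less_Suc_eq)
  qed
  have c: "\<forall>j. Suc j < Suc T \<longrightarrow> (C(Suc T := D)) (1 + j) \<inter> (C(Suc T := D)) (1 + Suc j) \<noteq> {}"
  proof (intro allI impI)
    fix j assume j: "Suc j < Suc T"
    show "(C(Suc T := D)) (1 + j) \<inter> (C(Suc T := D)) (1 + Suc j) \<noteq> {}"
    proof (cases "Suc j < T")
      case True then show ?thesis using a(2) by auto
    next
      case False then have "Suc j = T" using j by auto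
      then show ?thesis using assms(3) by auto
    qed
  qed
  show "nonstrict_walk L G s 1 (Suc T) (C(Suc T := D))"
    unfolding nonstrict_walk_def using b c a(3) assms(4) T1 by auto
  show "walk_visits 1 (Suc T) (C(Suc T := D)) = walk_visits 1 T C \<union> D"
    unfolding walk_visits_def lessThan_Suc by auto
qed

lemma prefix_walk:
  assumes "temporal_graph V L G" "s \<in> V" "1 \<le> T" "T \<le> L"
  shows "\<exists>C. nonstrict_walk L G s 1 T C"
  using assms(3,4)
proof (induction T rule: dec_induct)
  case base
  obtain D where "D \<in> G 1" "s \<in> D" using comp_exists[OF assms(1) _ _ assms(2), of 1] base by auto
  then have "nonstrict_walk L G s 1 1 (\<lambda>_. D)" using base unfolding nonstrict_walk_def by auto
  then show ?case by blast
next
  case (step T)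
  then obtain C where C: "nonstrict_walk L G s 1 T C" by auto
  have lt: "T - 1 < T" using step.hyps(1) by simp
  have eq: "1 + (T - 1) = T" using step.hyps(1) by simp
  have "C (1 + (T - 1)) \<in> G (1 + (T - 1))" using C lt unfolding nonstrict_walk_def by blast
  then have "C T \<in> G T" unfolding eq .
  then have "C T \<subseteq> V" "C T \<noteq> {}" using comp_props[OF assms(1)] step by auto
  then obtain x where x: "x \<in> C T" "x \<in> V" by auto
  obtain D where "D \<in> G (Suc T)" "x \<in> D" using comp_exists[OF assms(1) _ _ x(2), of "Suc T"] step by auto
  then show ?case using extend(1)[OF C, of D] x step by blast
qed

theorem lemma5:
  fixes V :: "'a set" and G :: "nat \<Rightarrow> 'a set set" and L t m :: nat and s :: 'a
  assumes "finite V"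
    and "temporal_graph V L G"
    and "\<forall>i\<in>{1..L}. card (G i) = 2"
    and "\<forall>i. 1 \<le> i \<and> i < L \<longrightarrow> G i \<noteq> G (Suc i)"
    and "1 \<le> t"
    and "real m \<ge> 1 + log 2 (real (card V))"
    and "t + m \<le> L"
    and "\<forall>j\<in>{t..<t+m}. free_transition G j"
    and "s \<in> V"
  shows "exploration_schedule V L G s"
proof -
  have main: "\<exists>C. nonstrict_walk L G s 1 (t+k) C \<and> card (V - walk_visits 1 (t+k) C) * 2^k \<le> card V"
    if "k \<le> m" for k
    using that
  proof (induction k)
    case 0
    then obtain C where "nonstrict_walk L G s 1 t C"
      using prefix_walk[OF assms(2,9,5)] assms(7) by auto
    moreover have "card (V - walk_visits 1 t C) \<le> card V" using assms(1) by (simp add: card_mono)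
    ultimately show ?case by auto
  next
    case (Suc k)
    then obtain C where C: "nonstrict_walk L G s 1 (t+k) C"
      and cd: "card (V - walk_visits 1 (t+k) C) * 2^k \<le> card V" by auto
    define U where "U = V - walk_visits 1 (t+k) C"
    have "free_transition G (t+k)" using assms(8) Suc by auto
    then obtain A B A' B' where ab: "G (t+k) = {A,B}" "G (Suc (t+k)) = {A',B'}"
      "A \<inter> A' \<noteq> {}" "A \<inter> B' \<noteq> {}" "B \<inter> A' \<noteq> {}" "B \<inter> B' \<noteq> {}"
      unfolding free_transition_def by (elim exE conjE) (rule that; assumption)
    have lt: "t + k - 1 < t + k" using assms(5) by simp
    have eq: "1 + (t + k - 1) = t + k" using assms(5) by simp
    have "C (1 + (t+k-1)) \<in> G (1 + (t+k-1))" using C lt unfolding nonstrict_walk_def by blast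
    then have Ct: "C (t+k) \<in> G (t+k)" unfolding eq .
    have inter: "C (t+k) \<inter> D \<noteq> {}" if "D \<in> G (Suc (t+k))" for D
      using that Ct ab by auto
    have ST0: "Suc (t+k) \<in> {1..L}" using assms(7) Suc.prems by auto
    have "is_partition V (G (Suc (t+k)))" using assms(2) ST0 unfolding temporal_graph_def by blast
    then have "\<Union>(G (Suc (t+k))) = V" unfolding is_partition_def by blast
    then have VAB: "V = A' \<union> B'" using ab(2) by simp
    have fU: "finite U" using assms(1) U_def by auto
    have "card (U - A') + card (U - B') \<le> card U"
    proof -
      have "card (U - A') + card (U - B') = card ((U - A') \<union> (U - B'))"
        using VAB U_def fU by (intro card_Un_disjoint[symmetric]) auto
      also have "\<dots> \<le> card U" using fU by (intro card_mono) auto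
      finally show ?thesis .
    qed
    then have "\<exists>D\<in>{A',B'}. 2 * card (U - D) \<le> card U"
    proof (cases "card (U - A') \<le> card (U - B')")
      case True
      then have "2 * card (U - A') \<le> card U" using \<open>card (U - A') + card (U - B') \<le> card U\<close> by linarith
      then show ?thesis by blast
    next
      case False
      then have "2 * card (U - B') \<le> card U" using \<open>card (U - A') + card (U - B') \<le> card U\<close> by linarith
      then show ?thesis by blast
    qed
    then obtain D where D: "D \<in> G (Suc (t+k))" "2 * card (U - D) \<le> card U"
      unfolding ab(2) by blast
    have ST: "Suc (t+k) \<le> L" using assms(7) Suc.prems by auto
    note e = extend[OF C D(1) inter[OF D(1)] ST]
    have "V - walk_visits 1 (t + Suc k) (C(Suc (t+k) := D)) = U - D"
      using e(2) U_def by auto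
    moreover have "card (U - D) * 2^(Suc k) \<le> card V"
    proof -
      have "card (U - D) * 2^(Suc k) = (2 * card (U - D)) * 2^k" by simp
      also have "\<dots> \<le> card U * 2^k" using D(2) by (rule mult_le_mono1)
      also have "\<dots> \<le> card V" using cd U_def by simp
      finally show ?thesis .
    qed
    ultimately show ?case using e(1) by (metis add_Suc_right)
  qed
  obtain C where C: "nonstrict_walk L G s 1 (t+m) C" and cd: "card (V - walk_visits 1 (t+m) C) * 2^m \<le> card V"
    using main by blast
  have n1: "card V \<ge> 1" using assms(1,9) by (metis One_nat_def Suc_leI card_gt_0_iff empty_iff)
  have "log 2 (real (card V)) \<le> real m - 1" using assms(6) by simp
  then have "2 powr (log 2 (real (card V))) \<le> 2 powr (real m - 1)"
    by (intro powr_mono) auto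
  then have "real (card V) \<le> 2 powr (real m - 1)" using n1 by simp
  also have "\<dots> < 2 powr real m" by simp
  also have "\<dots> = real (2^m)" by (simp add: powr_realpow)
  finally have "card V < 2^m" by linarith
  then have "card (V - walk_visits 1 (t+m) C) = 0"
  proof (rule contrapos_pp)
    assume "card (V - walk_visits 1 (t+m) C) \<noteq> 0"
    then have "(2::nat)^m \<le> card (V - walk_visits 1 (t+m) C) * 2^m" by simp
    then show "\<not> card V < 2^m" using cd by linarith
  qed
  then have sub: "V \<subseteq> walk_visits 1 (t+m) C" using assms(1) by auto
  have "walk_visits 1 (t+m) C \<subseteq> V"
  proof
    fix x assume "x \<in> walk_visits 1 (t+m) C"
    then obtain j where j: "j < t+m" "x \<in> C (1+j)" unfolding walk_visits_def by auto
    then have "C (1+j) \<in> G (1+j)" using C unfolding nonstrict_walk_def by auto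
    then show "x \<in> V" using comp_props(1)[OF assms(2), of "1+j"] j C assms(7)
      unfolding nonstrict_walk_def by auto
  qed
  then show ?thesis unfolding exploration_schedule_def using C sub by blast
qed

end
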